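(* Let $N'E_+(x,t):=\frac{\sqrt x}{2t}\exp\!\left(-\frac{x^2}{4t}\right)$ for $x,t>0$ and $(N'E_+*_tN'E_+)(x,t):=\int_0^tN'E_+(x,t-\tilde t)\,N'E_+(x,\tilde t)\,d\tilde t$. Then $$\int_0^1(N'E_+*_tN'E_+)(x,t)\,dx=\frac12+O(t^\infty),\qquad t\to0^+,$$ i.e. the difference is $O(t^N)$ for every $N$. *)

theory Defs
  imports "HOL-Analysis.Analysis" "HOL-Library.Landau_Symbols"
begin

definition NEp :: "real \<Rightarrow> real \<Rightarrow> real" where
  "NEp x t = sqrt x / (2 * t) * exp (- (x^2) / (4 * t))"

definition NEp_conv :: "real \<Rightarrow> real \<Rightarrow> real" where
  "NEp_conv x t = integral {0..t} (\<lambda>s. NEp x (t - s) * NEp x s)"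

end

theory Submission
  imports Defs
begin

definition aa :: "real \<Rightarrow> real \<Rightarrow> real" where "aa t s = t / (4 * s * (t - s))"

lemma prod_formula:
  assumes "x \<ge> 0" "t > 0"
  shows "NEp x (t-s) * NEp x s = (aa t s / t) * x * exp (- aa t s * x^2)"
proof (cases "s = 0 \<or> s = t")
  case True then show ?thesis by (auto simp: NEp_def aa_def)
next
  case False
  hence s: "s \<noteq> 0" "t - s \<noteq> 0" by auto
  have e: "(- (x^2) / (4 * (t - s))) + (- (x^2) / (4 * s)) = - aa t s * x^2"
  proof -
    have s2: "4 * t - 4 * s \<noteq> 0" "4 * s \<noteq> 0" using s by auto
    show ?thesis using s s2 by (simp add: aa_def field_simps)
  qed
  have "NEp x (t-s) * NEp x s = (sqrt x * sqrt x) / (4 * s * (t-s)) * (exp (- (x^2) / (4 * (t - s))) * exp (- (x^2) / (4 * s)))"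
    unfolding NEp_def using s by (simp add: field_simps)
  also have "\<dots> = x / (4 * s * (t-s)) * exp (- aa t s * x^2)"
    using assms by (subst exp_add[symmetric], subst e, simp)
  moreover have k: "aa t s / t = 1 / (4 * s * (t - s))" using assms by (simp add: aa_def)
  ultimately show ?thesis by (simp add: k)
qed

lemma aa_nonneg: "t > 0 \<Longrightarrow> s \<in> {0..t} \<Longrightarrow> aa t s \<ge> 0"
  by (auto simp: aa_def intro!: divide_nonneg_nonneg)

lemma aa_ge: "t > 0 \<Longrightarrow> s \<in> {0<..<t} \<Longrightarrow> aa t s \<ge> 1 / t"
proof -
  assume t: "t > 0" and s: "s \<in> {0<..<t}"
  have "(t - 2 * s)^2 = t^2 - 4 * s * (t - s)" by (simp add: power2_eq_square algebra_simps)
  hence "4 * s * (t - s) \<le> t^2" using zero_le_power2[of "t - 2 * s"] by linarith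
  moreover have "4 * s * (t-s) > 0" using s by auto
  ultimately show ?thesis using t by (simp add: aa_def field_simps power2_eq_square)
qed

lemma F_nonneg: "t > 0 \<Longrightarrow> x \<ge> 0 \<Longrightarrow> s \<in> {0..t} \<Longrightarrow> NEp x (t-s) * NEp x s \<ge> 0"
  using prod_formula[of x t s] aa_nonneg[of t s] by simp

lemma F_bound: assumes "t > 0" "x \<ge> 0" "s \<in> {0..t}" shows "NEp x (t-s) * NEp x s \<le> 1 / (t * x)"
proof (cases "x = 0")
  case True then show ?thesis by (simp add: NEp_def)
next
  case False
  let ?a = "aa t s"
  have a: "?a \<ge> 0" using aa_nonneg assms by blast
  have "?a * x^2 * exp (- ?a * x^2) \<le> 1"
  proof -
    have "?a * x^2 \<le> exp (?a * x^2)" using exp_ge_add_one_self[of "?a * x^2"] by linarith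
    thus ?thesis by (simp add: exp_minus field_simps)
  qed
  hence "(?a / t) * x * exp (- ?a * x^2) \<le> 1 / (t * x)"
    using False assms by (simp add: field_simps power2_eq_square)
  thus ?thesis using prod_formula assms by simp
qed

lemma xint:
  fixes t a :: real
  assumes t: "t > 0" and a: "a \<ge> 0"
  shows "((\<lambda>x. (a/t) * x * exp (- a * x^2)) has_integral (1 - exp (- a)) / (2*t)) {0..1}"
proof (cases "a = 0")
  case True then show ?thesis by simp
next
  case False
  hence a: "a > 0" using a by simp
  have "((\<lambda>x. (a/t) * x * exp (- a * x^2)) has_integral
      ((\<lambda>x. - (1/(2*t)) * exp (- a * x^2)) 1 - (\<lambda>x. - (1/(2*t)) * exp (- a * x^2)) 0)) {0..1}"
  proof (rule fundamental_theorem_of_calculus)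
    fix x :: real assume "x \<in> {0..1}"
    have "((\<lambda>x. - (1/(2*t)) * exp (- a * x^2)) has_real_derivative (a/t) * x * exp (- a * x^2)) (at x within {0..1})"
      by (rule derivative_eq_intros refl)+ (use t in \<open>simp add: field_simps\<close>)
    thus "((\<lambda>x. - (1/(2*t)) * exp (- a * x^2)) has_vector_derivative (a/t) * x * exp (- a * x^2)) (at x within {0..1})"
      by (simp add: has_real_derivative_iff_has_vector_derivative)
  qed simp
  thus ?thesis by (simp add: diff_divide_distrib)
qed

lemma main_value:
  fixes t :: real
  assumes t: "t > 0"
  shows "\<bar>integral {0..1} (\<lambda>x. NEp_conv x t) - 1/2\<bar> \<le> exp (-1/t) / 2"
proof -
  define F where "F x s = NEp x (t-s) * NEp x s" for x s
  define h where "h s = (1 - exp (- aa t s)) / (2*t)" for s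
  have Fmeas[measurable]: "(\<lambda>(x,s). F x s) \<in> borel_measurable (lborel \<Otimes>\<^sub>M lborel)"
    unfolding F_def NEp_def by measurable
  have Fx_meas[measurable]: "F x \<in> borel_measurable lborel" for x
    unfolding F_def NEp_def by measurable
  have Fs_meas[measurable]: "(\<lambda>x. F x s) \<in> borel_measurable lborel" for s
    unfolding F_def NEp_def by measurable
  have hmeas[measurable]: "h \<in> borel_measurable lborel"
    unfolding h_def aa_def by measurable
  have Fint: "set_integrable lborel {0..t} (F x)" if x: "x \<in> {0..1}" for x
    unfolding set_integrable_def
    apply (rule integrableI_bounded_set_indicator[where B="1/(t*x)"])
       apply simp
      apply (rule Fx_meas)
     apply simp
    using x t by (auto simp: F_def F_bound F_nonneg)
  have conv_int: "(F x has_integral NEp_conv x t) {0..t}" if x: "x \<in> {0..1}" for x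
    using set_borel_integral_eq_integral(1)[OF Fint[OF x]]
    by (simp add: NEp_conv_def F_def[abs_def] has_integral_integral)
  have conv_eq: "NEp_conv x t = (LINT s:{0..t}|lborel. F x s)" if x: "x \<in> {0..1}" for x
    using set_borel_integral_eq_integral(2)[OF Fint[OF x]] by (simp add: NEp_conv_def F_def[abs_def])
  have conv_nn: "ennreal (NEp_conv x t) = (\<integral>\<^sup>+s. ennreal (F x s) * indicator {0..t} s \<partial>lborel)"
    if x: "x \<in> {0..1}" for x
    using nn_integral_has_integral_lebesgue'[OF _ conv_int[OF x], symmetric] x t
    by (auto simp: F_def F_nonneg)
  have inner: "(\<integral>\<^sup>+x. ennreal (F x s) * indicator {0..1} x \<partial>lborel) = ennreal (h s)"
    if s: "s \<in> {0..t}" for s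
  proof -
    have "((\<lambda>x. F x s) has_integral h s) {0..1}"
    proof -
      have "((\<lambda>x. (aa t s / t) * x * exp (- aa t s * x^2)) has_integral h s) {0..1}"
        unfolding h_def using xint[OF t aa_nonneg[OF t s]] .
      then show ?thesis
        by (rule has_integral_eq[rotated]) (use t in \<open>auto simp: F_def prod_formula\<close>)
    qed
    moreover have nn: "\<And>x. x \<in> {0..1} \<Longrightarrow> 0 \<le> F x s" using t s by (auto simp: F_def F_nonneg)
    ultimately show ?thesis
      using nn_integral_has_integral_lebesgue'[where f="\<lambda>x. F x s" and \<Omega>="{0..1}", OF nn] by simp
  qed
  have hint: "set_integrable lborel {0..t} h"
    unfolding set_integrable_def
    apply (rule integrableI_bounded_set_indicator[where B="1/(2*t)"])
       apply simp
      apply (rule hmeas)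
     apply simp
    using t aa_nonneg[OF t] by (auto simp: h_def divide_simps)
  define V where "V = integral {0..t} h"
  have h_hasint: "(h has_integral V) {0..t}"
    using set_borel_integral_eq_integral(1)[OF hint] by (simp add: V_def has_integral_integral)
  have h_nonneg: "s \<in> {0..t} \<Longrightarrow> 0 \<le> h s" for s
    using t aa_nonneg[OF t, of s] by (auto simp: h_def)
  have V_nonneg: "V \<ge> 0"
    using has_integral_nonneg[OF h_hasint] h_nonneg by auto
  define \<phi> where "\<phi> x = indicator {0..1} x * (LINT s:{0..t}|lborel. F x s)" for x
  have phi_meas: "\<phi> \<in> borel_measurable borel"
    unfolding \<phi>_def set_lebesgue_integral_def by measurable
  have phi_eq: "\<phi> x = (if x \<in> {0..1} then NEp_conv x t else 0)" for x
    by (auto simp: \<phi>_def conv_eq)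
  have phi_nonneg: "0 \<le> \<phi> x" for x
  proof -
    have "0 \<le> NEp_conv x t" if "x \<in> {0..1}"
      using has_integral_nonneg[OF conv_int[OF that]] that t by (auto simp: F_def F_nonneg)
    thus ?thesis by (auto simp: phi_eq)
  qed
  have "(\<integral>\<^sup>+x. \<phi> x \<partial>lborel) = (\<integral>\<^sup>+x. (\<integral>\<^sup>+s. ennreal (F x s) * indicator {0..t} s \<partial>lborel) * indicator {0..1} x \<partial>lborel)"
    by (intro nn_integral_cong) (auto simp: phi_eq conv_nn)
  also have "\<dots> = (\<integral>\<^sup>+x. (\<integral>\<^sup>+s. ennreal (F x s) * indicator {0..t} s * indicator {0..1} x \<partial>lborel) \<partial>lborel)"
    by (intro nn_integral_cong nn_integral_multc[symmetric]) measurable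
  also have "\<dots> = (\<integral>\<^sup>+s. (\<integral>\<^sup>+x. ennreal (F x s) * indicator {0..t} s * indicator {0..1} x \<partial>lborel) \<partial>lborel)"
    by (rule lborel_pair.Fubini'[symmetric]) measurable
  also have "\<dots> = (\<integral>\<^sup>+s. (\<integral>\<^sup>+x. ennreal (F x s) * indicator {0..1} x \<partial>lborel) * indicator {0..t} s \<partial>lborel)"
  proof (intro nn_integral_cong)
    fix s
    have "(\<integral>\<^sup>+x. ennreal (F x s) * indicator {0..t} s * indicator {0..1} x \<partial>lborel)
        = (\<integral>\<^sup>+x. (ennreal (F x s) * indicator {0..1} x) * indicator {0..t} s \<partial>lborel)"
      by (simp add: mult_ac)
    also have "\<dots> = (\<integral>\<^sup>+x. ennreal (F x s) * indicator {0..1} x \<partial>lborel) * indicator {0..t} s"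
      by (rule nn_integral_multc) measurable
    finally show "(\<integral>\<^sup>+x. ennreal (F x s) * indicator {0..t} s * indicator {0..1} x \<partial>lborel)
        = (\<integral>\<^sup>+x. ennreal (F x s) * indicator {0..1} x \<partial>lborel) * indicator {0..t} s" .
  qed
  also have "\<dots> = (\<integral>\<^sup>+s. ennreal (h s) * indicator {0..t} s \<partial>lborel)"
    by (intro nn_integral_cong) (auto simp: inner split: split_indicator)
  also have "\<dots> = ennreal V"
    by (rule nn_integral_has_integral_lebesgue'[OF h_nonneg h_hasint])
  finally have nnV: "(\<integral>\<^sup>+x. \<phi> x \<partial>lborel) = ennreal V" .
  have "(\<phi> has_integral V) UNIV"
    by (rule nn_integral_has_integral[OF phi_meas phi_nonneg nnV V_nonneg])
  hence "((\<lambda>x. NEp_conv x t) has_integral V) {0..1}"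
  proof -
    have "\<phi> = (\<lambda>x. if x \<in> {0..1} then NEp_conv x t else 0)" by (simp add: fun_eq_iff phi_eq)
    with \<open>(\<phi> has_integral V) UNIV\<close> show ?thesis
      using has_integral_restrict_UNIV[of "{0..1}" "\<lambda>x. NEp_conv x t" V] by simp
  qed
  hence intV: "integral {0..1} (\<lambda>x. NEp_conv x t) = V" by (rule integral_unique)
  have c: "((\<lambda>s. 1/(2*t)) has_integral 1/2) {0..t}"
    using has_integral_const_real[of "1/(2*t)" 0 t] t by simp
  have d: "((\<lambda>s. h s - 1/(2*t)) has_integral (V - 1/2)) {0..t}"
    by (rule has_integral_diff[OF h_hasint c])
  have "norm (V - 1/2) \<le> exp (-1/t) / (2*t) * measure lborel {0..t}"
  proof (rule has_integral_bound_real[OF _ _ d, where S="{0,t}"])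
    show "0 \<le> exp (-1/t) / (2*t)" using t by simp
    show "finite {0,t}" by simp
    fix s assume s: "s \<in> {0..t} - {0,t}"
    hence s': "s \<in> {0<..<t}" by auto
    have "exp (- aa t s) \<le> exp (-1/t)" using aa_ge[OF t s'] by simp
    thus "norm (h s - 1/(2*t)) \<le> exp (-1/t) / (2*t)"
      using t by (simp add: h_def divide_simps)
  qed
  thus ?thesis using t intV by simp
qed

lemma exp_bound:
  fixes t :: real assumes t: "t > 0"
  shows "exp (-1/t) \<le> real N ^ N * t ^ N"
proof (cases "N = 0")
  case True then show ?thesis using t by simp
next
  case False
  have p: "0 < 1/t" using t by simp
  have "- real N \<le> 1/t" using p of_nat_0_le_iff[of N] by linarith
  hence "(1 + (1/t) / real N) ^ N \<le> exp (1/t)"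
    by (rule exp_ge_one_plus_x_over_n_power_n) (use False in auto)
  moreover have "(1 / (real N * t)) ^ N \<le> (1 + (1/t) / real N) ^ N"
    by (rule power_mono) (use t in \<open>auto simp: mult.commute\<close>)
  ultimately have "(1 / (real N * t)) ^ N \<le> exp (1/t)" by linarith
  hence "1 \<le> exp (1/t) * (real N * t) ^ N"
    using t False by (simp add: power_divide divide_simps mult.commute)
  hence "exp (-1/t) \<le> exp (-1/t) * (exp (1/t) * (real N * t) ^ N)"
    by (simp add: mult_le_cancel_left1)
  also have "\<dots> = (real N * t) ^ N" by (simp add: exp_minus field_simps)
  finally show ?thesis by (simp add: power_mult_distrib)
qed

theorem proposition6p1:
  fixes N :: nat
  shows "(\<lambda>t. integral {0..1} (\<lambda>x. NEp_conv x t) - 1/2) \<in> O[at_right 0](\<lambda>t. t ^ N)"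
proof (rule bigoI[where c="real N ^ N"])
  show "\<forall>\<^sub>F t in at_right 0. norm (integral {0..1} (\<lambda>x. NEp_conv x t) - 1/2) \<le> real N ^ N * norm (t ^ N)"
    using eventually_at_right_less[of "0::real"]
  proof (rule eventually_mono)
    fix t :: real assume t: "0 < t"
    have "norm (integral {0..1} (\<lambda>x. NEp_conv x t) - 1/2) \<le> exp (-1/t) / 2"
      using main_value[OF t] by simp
    also have "\<dots> \<le> exp (-1/t)" by simp
    also have "\<dots> \<le> real N ^ N * norm (t ^ N)" using exp_bound[OF t, of N] t by (simp add: norm_power)
    finally show "norm (integral {0..1} (\<lambda>x. NEp_conv x t) - 1/2) \<le> real N ^ N * norm (t ^ N)" .
  qed
qed

end
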